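(* Counting the solutions of nondeterministic constraint logic (NCL) instances is not $\mathsf{\#P}$-complete under parsimonious reductions.
   Context: An NCL instance is a 3-regular undirected graph whose edges are colored blue or red, with each vertex incident to either exactly one or exactly three blue edges. A solution is an orientation of its edges such that every vertex has at least one incoming blue edge or at least two incoming red edges. A parsimonious reduction from counting problem $X$ to counting problem $Y$ is a polynomial-time transformation of instances of $X$ into instances of $Y$ with the same number of solutions. *)

theory Defs
  imports Main
begin

record 'v ncl =
  nverts :: "'v set"
  nedges :: "'v set set"
  nblue  :: "'v set set"

definition incident :: "'v set set \<Rightarrow> 'v \<Rightarrow> 'v set set" where
  "incident F v = {e \<in> F. v \<in> e}"

definition ncl_instance :: "'v ncl \<Rightarrow> bool" where
  "ncl_instance G \<longleftrightarrow>
     finite (nverts G) \<and> nverts G \<noteq> {} \<and>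
     (\<forall>e \<in> nedges G. e \<subseteq> nverts G \<and> card e = 2) \<and>
     (\<forall>v \<in> nverts G. card (incident (nedges G) v) = 3) \<and>
     nblue G \<subseteq> nedges G \<and>
     (\<forall>v \<in> nverts G. card (incident (nblue G) v) \<in> {1, 3})"

text \<open>An orientation is a set of arcs (u,w) (meaning u \<rightarrow> w) containing, for each
 edge {u,w}, exactly one of (u,w), (w,u), and nothing else.\<close>

definition orientation :: "'v ncl \<Rightarrow> ('v \<times> 'v) set \<Rightarrow> bool" where
  "orientation G A \<longleftrightarrow>
     (\<forall>(u, w) \<in> A. {u, w} \<in> nedges G) \<and>
     (\<forall>u w. {u, w} \<in> nedges G \<longrightarrow> ((u, w) \<in> A \<longleftrightarrow> (w, u) \<notin> A))"

definition in_blue :: "'v ncl \<Rightarrow> ('v \<times> 'v) set \<Rightarrow> 'v \<Rightarrow> nat" where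
  "in_blue G A v = card {u. (u, v) \<in> A \<and> {u, v} \<in> nblue G}"

definition in_red :: "'v ncl \<Rightarrow> ('v \<times> 'v) set \<Rightarrow> 'v \<Rightarrow> nat" where
  "in_red G A v = card {u. (u, v) \<in> A \<and> {u, v} \<in> nedges G - nblue G}"

definition ncl_solutions :: "'v ncl \<Rightarrow> ('v \<times> 'v) set set" where
  "ncl_solutions G = {A. orientation G A \<and>
     (\<forall>v \<in> nverts G. in_blue G A v \<ge> 1 \<or> in_red G A v \<ge> 2)}"

type_synonym lit = "nat \<times> bool"   (* (variable, polarity) *)
type_synonym cnf = "lit list list"

definition cnf_vars :: "cnf \<Rightarrow> nat set" where
  "cnf_vars F = {x. \<exists>c \<in> set F. \<exists>b. (x, b) \<in> set c}"

text \<open>An assignment is represented by the set of variables set to true.\<close>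
definition cnf_sat :: "nat set \<Rightarrow> cnf \<Rightarrow> bool" where
  "cnf_sat T F \<longleftrightarrow> (\<forall>c \<in> set F. \<exists>(x, b) \<in> set c. (x \<in> T) = b)"

definition sat_count :: "cnf \<Rightarrow> nat" where
  "sat_count F = card {T. T \<subseteq> cnf_vars F \<and> cnf_sat T F}"

end

theory Submission
  imports Defs
begin

lemma orient_edge:
  assumes "orientation G A" "(u, w) \<in> A" shows "{u, w} \<in> nedges G"
  using assms unfolding orientation_def by auto

lemma in_V:
  assumes "ncl_instance G" "orientation G A" "(u, w) \<in> A"
  shows "u \<in> nverts G" "w \<in> nverts G"
  using assms orient_edge[OF assms(2,3)] unfolding ncl_instance_def by auto

lemma fin_in:
  assumes "ncl_instance G" "orientation G A"
  shows "finite {u. (u, x) \<in> A \<and> P u}"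
proof (rule finite_subset[of _ "nverts G"])
  show "{u. (u, x) \<in> A \<and> P u} \<subseteq> nverts G" using in_V[OF assms] by auto
  show "finite (nverts G)" using assms(1) unfolding ncl_instance_def by auto
qed

lemma flip_orient:
  assumes "orientation G A" "(z, v) \<in> A"
  shows "orientation G (insert (v, z) (A - {(z, v)}))"
proof -
  have e: "{z, v} \<in> nedges G" using orient_edge[OF assms] .
  have e2: "{v, z} \<in> nedges G" using e by (simp add: insert_commute)
  have zv: "(v, z) \<notin> A" using assms e unfolding orientation_def by blast
  have o1: "\<forall>(u, w)\<in>A. {u, w} \<in> nedges G" and o2: "\<And>u w. {u, w} \<in> nedges G \<Longrightarrow> ((u, w) \<in> A \<longleftrightarrow> (w, u) \<notin> A)"
    using assms(1) unfolding orientation_def by blast+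
  show ?thesis
    unfolding orientation_def
  proof (intro conjI allI impI)
    show "\<forall>(u, w)\<in>insert (v, z) (A - {(z, v)}). {u, w} \<in> nedges G"
      using o1 e2 by blast
  next
    fix x y assume xy: "{x, y} \<in> nedges G"
    show "((x, y) \<in> insert (v, z) (A - {(z, v)})) = ((y, x) \<notin> insert (v, z) (A - {(z, v)}))"
    proof (cases "{x, y} = {z, v}")
      case True
      then have "(x = z \<and> y = v) \<or> (x = v \<and> y = z)" by (metis doubleton_eq_iff)
      moreover have "z \<noteq> v" using o2[OF e] assms(2) by blast
      ultimately show ?thesis
      proof (elim disjE conjE)
        assume "x = z" "y = v" "z \<noteq> v" then show ?thesis by simp
      next
        assume "x = v" "y = z" "z \<noteq> v" then show ?thesis by simp
      qed
    next
      case False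
      have n1: "(x, y) \<noteq> (z, v)" using False by auto
      have n2: "(x, y) \<noteq> (v, z)" using False by (auto simp: insert_commute)
      have n3: "(y, x) \<noteq> (z, v)" using False by (auto simp: insert_commute)
      have n4: "(y, x) \<noteq> (v, z)" using False by auto
      have "((x, y) \<in> insert (v, z) (A - {(z, v)})) = ((x, y) \<in> A)" using n1 n2 by blast
      moreover have "((y, x) \<in> insert (v, z) (A - {(z, v)})) = ((y, x) \<in> A)" using n3 n4 by blast
      ultimately show ?thesis using o2[OF xy] by simp
    qed
  qed
qed

lemma flip_sol:
  assumes G: "ncl_instance G" and A: "A \<in> ncl_solutions G" and zv: "(z, v) \<in> A"
    and vb: "in_blue G (insert (v, z) (A - {(z, v)})) v \<ge> 1"
  shows "insert (v, z) (A - {(z, v)}) \<in> ncl_solutions G"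
proof -
  let ?B = "insert (v, z) (A - {(z, v)})"
  have oA: "orientation G A" using A unfolding ncl_solutions_def by auto
  have oB: "orientation G ?B" using flip_orient[OF oA zv] .
  have "in_blue G ?B x \<ge> 1 \<or> in_red G ?B x \<ge> 2" if x: "x \<in> nverts G" for x
  proof (cases "x = v")
    case True then show ?thesis using vb by simp
  next
    case False
    have s1: "{u. (u, x) \<in> A \<and> {u, x} \<in> nblue G} \<subseteq> {u. (u, x) \<in> ?B \<and> {u, x} \<in> nblue G}"
      using False by auto
    have s2: "{u. (u, x) \<in> A \<and> {u, x} \<in> nedges G - nblue G} \<subseteq> {u. (u, x) \<in> ?B \<and> {u, x} \<in> nedges G - nblue G}"
      using False by auto
    have "in_blue G A x \<le> in_blue G ?B x"
      unfolding in_blue_def by (rule card_mono[OF fin_in[OF G oB] s1])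
    moreover have "in_red G A x \<le> in_red G ?B x"
      unfolding in_red_def by (rule card_mono[OF fin_in[OF G oB] s2])
    moreover have "in_blue G A x \<ge> 1 \<or> in_red G A x \<ge> 2" using A x unfolding ncl_solutions_def by auto
    ultimately show ?thesis by linarith
  qed
  then show ?thesis using oB unfolding ncl_solutions_def by auto
qed

lemma nbr_card:
  assumes G: "ncl_instance G" and F: "F \<subseteq> nedges G"
  shows "card {z. {z, v} \<in> F} = card (incident F v)"
proof -
  have "bij_betw (\<lambda>z. {z, v}) {z. {z, v} \<in> F} (incident F v)"
  proof (rule bij_betwI')
    fix x y assume "x \<in> {z. {z, v} \<in> F}" "y \<in> {z. {z, v} \<in> F}"
    show "({x, v} = {y, v}) = (x = y)" by (auto simp: doubleton_eq_iff)
  next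
    fix x assume "x \<in> {z. {z, v} \<in> F}" then show "{x, v} \<in> incident F v"
      unfolding incident_def by auto
  next
    fix e assume "e \<in> incident F v"
    then have e: "e \<in> F" "v \<in> e" unfolding incident_def by auto
    then have "card e = 2" using G F unfolding ncl_instance_def by auto
    then obtain a b where ab: "e = {a, b}" "a \<noteq> b" by (auto simp: card_2_iff)
    show "\<exists>x\<in>{z. {z, v} \<in> F}. e = {x, v}"
    proof (cases "a = v")
      case True
      then have eb: "e = {b, v}" using ab(1) by (simp add: insert_commute)
      show ?thesis
      proof (rule bexI[where x = b])
        show "e = {b, v}" by (rule eb)
        show "b \<in> {z. {z, v} \<in> F}" using eb e(1) by simp
      qed
    next
      case False then have "b = v" using ab e by blast
      then have ea: "e = {a, v}" using ab(1) by simp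
      show ?thesis
      proof (rule bexI[where x = a])
        show "e = {a, v}" by (rule ea)
        show "a \<in> {z. {z, v} \<in> F}" using ea e(1) by simp
      qed
    qed
  qed
  then show ?thesis by (rule bij_betw_same_card)
qed

lemma conv_orient:
  assumes "orientation G A" shows "orientation G (converse A)"
proof -
  have o1: "\<And>u w. (u, w) \<in> A \<Longrightarrow> {u, w} \<in> nedges G"
    and o2: "\<And>u w. {u, w} \<in> nedges G \<Longrightarrow> ((u, w) \<in> A \<longleftrightarrow> (w, u) \<notin> A)"
    using assms unfolding orientation_def by blast+
  have c: "\<And>u w. {u, w} = {w, u}" by (rule insert_commute)
  show ?thesis unfolding orientation_def
  proof (intro conjI allI impI ballI)
    fix p assume pA: "p \<in> converse A"
    obtain u w where p: "p = (u, w)" by (cases p)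
    then have "(w, u) \<in> A" using pA by simp
    then have "{w, u} \<in> nedges G" using o1 by blast
    then have "{u, w} \<in> nedges G" by (simp only: c)
    then show "case p of (u, w) \<Rightarrow> {u, w} \<in> nedges G" using p by simp
  next
    fix u w assume "{u, w} \<in> nedges G"
    then have "{w, u} \<in> nedges G" by (simp only: c)
    then have "(w, u) \<in> A \<longleftrightarrow> (u, w) \<notin> A" by (rule o2)
    then show "((u, w) \<in> converse A) = ((w, u) \<notin> converse A)" by simp
  qed
qed

lemma second_solution:
  assumes G: "ncl_instance G" and A: "A \<in> ncl_solutions G"
  shows "\<exists>B \<in> ncl_solutions G. B \<noteq> A"
proof -
  have oA: "orientation G A" using A unfolding ncl_solutions_def by auto
  have finV: "finite (nverts G)" using G unfolding ncl_instance_def by auto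
  have oA2: "\<And>u w. {u, w} \<in> nedges G \<Longrightarrow> ((u, w) \<in> A \<longleftrightarrow> (w, u) \<notin> A)"
    using oA unfolding orientation_def by blast
  show ?thesis
  proof (cases "converse A \<in> ncl_solutions G")
    case True
    obtain v where v: "v \<in> nverts G" using G unfolding ncl_instance_def by auto
    then have "card (incident (nedges G) v) = 3" using G unfolding ncl_instance_def by auto
    then have "incident (nedges G) v \<noteq> {}" by (metis card.empty zero_neq_numeral)
    then obtain e0 where "e0 \<in> incident (nedges G) v" by blast
    then have e: "e0 \<in> nedges G" unfolding incident_def by blast
    then have "card e0 = 2" using G unfolding ncl_instance_def by auto
    then obtain x y where xy: "e0 = {x, y}" by (auto simp: card_2_iff)
    have "converse A \<noteq> A"
    proof
      assume eq: "converse A = A"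
      have "(x, y) \<in> A \<longleftrightarrow> (y, x) \<notin> A" using oA e xy unfolding orientation_def by auto
      moreover have "(x, y) \<in> A \<longleftrightarrow> (y, x) \<in> A" using eq by (metis converse_iff)
      ultimately show False by blast
    qed
    show ?thesis
    proof (rule bexI[where x = "converse A"])
      show "converse A \<noteq> A" by fact
      show "converse A \<in> ncl_solutions G" by (rule True)
    qed
  next
    case False
    have oR: "orientation G (converse A)" using conv_orient[OF oA] .
    then obtain v where v: "v \<in> nverts G" and vb: "in_blue G (converse A) v < 1"
      and vr: "in_red G (converse A) v < 2"
      using False unfolding ncl_solutions_def by (auto simp: not_le)
    define NE where "NE = {z. {z, v} \<in> nedges G}"
    define NB where "NB = {z. {z, v} \<in> nblue G}"
    have blE: "nblue G \<subseteq> nedges G" using G unfolding ncl_instance_def by auto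
    have cNE: "card NE = 3" unfolding NE_def using nbr_card[OF G order_refl] v G
      unfolding ncl_instance_def by auto
    have cNB: "card NB = 1 \<or> card NB = 3" unfolding NB_def using nbr_card[OF G blE] v G
      unfolding ncl_instance_def by auto
    have NBE: "NB \<subseteq> NE" unfolding NB_def NE_def using blE by auto
    have finNE: "finite NE" using cNE by (metis card.infinite zero_neq_numeral)
    have cNR: "card (NE - NB) = card NE - card NB"
      using NBE finNE by (simp add: card_Diff_subset finite_subset)
    have outB: "{u. (u, v) \<in> converse A \<and> {u, v} \<in> nblue G} = {}"
      using vb fin_in[OF G oR] unfolding in_blue_def by auto
    have allB: "z \<in> NB \<Longrightarrow> (z, v) \<in> A" for z
    proof -
      assume z: "z \<in> NB"
      then have "{z, v} \<in> nedges G" using NBE NE_def by auto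
      then have "{v, z} \<in> nedges G" by (simp add: insert_commute)
      moreover have "(v, z) \<notin> A" using outB z unfolding NB_def by auto
      ultimately show "(z, v) \<in> A" using oA unfolding orientation_def by blast
    qed
    obtain z where z: "(z, v) \<in> A" and zok: "z \<in> NB \<longrightarrow> card NB = 3"
    proof (cases "card NB = 3")
      case True
      then obtain z where "z \<in> NB" by (metis card.empty ex_in_conv zero_neq_numeral)
      then show ?thesis using that allB True by blast
    next
      case False
      then have c1: "card NB = 1" using cNB by auto
      then have c2: "card (NE - NB) = 2" using cNR cNE by auto
      have "\<exists>z \<in> NE - NB. (z, v) \<in> A"
      proof (rule ccontr)
        assume nz: "\<not> (\<exists>z \<in> NE - NB. (z, v) \<in> A)"
        have "\<forall>z \<in> NE - NB. (v, z) \<in> A"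
        proof
          fix w assume w: "w \<in> NE - NB"
          then have "{w, v} \<in> nedges G" unfolding NE_def by blast
          then have "(w, v) \<in> A \<longleftrightarrow> (v, w) \<notin> A" by (rule oA2)
          moreover have "(w, v) \<notin> A" using nz w by blast
          ultimately show "(v, w) \<in> A" by blast
        qed
        then have "NE - NB \<subseteq> {u. (u, v) \<in> converse A \<and> {u, v} \<in> nedges G - nblue G}"
          unfolding NE_def NB_def by auto
        then have "card (NE - NB) \<le> in_red G (converse A) v"
          unfolding in_red_def by (rule card_mono[OF fin_in[OF G oR]])
        then show False using vr c2 by auto
      qed
      then obtain z where "z \<in> NE - NB" "(z, v) \<in> A" by blast
      then show ?thesis using that by blast
    qed
    let ?B = "insert (v, z) (A - {(z, v)})"
    have "in_blue G ?B v \<ge> 1"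
    proof (cases "z \<in> NB")
      case True
      then have "card NB = 3" using zok by auto
      then have "card (NB - {z}) = 2" using True by (simp add: card_Diff_singleton_if)
      then obtain w where w: "w \<in> NB" "w \<noteq> z" by (metis card.empty Diff_iff ex_in_conv singletonI zero_neq_numeral)
      then have "w \<in> {u. (u, v) \<in> ?B \<and> {u, v} \<in> nblue G}" using allB unfolding NB_def by auto
      then have "{u. (u, v) \<in> ?B \<and> {u, v} \<in> nblue G} \<noteq> {}" by blast
      then show ?thesis unfolding in_blue_def
        using fin_in[OF G flip_orient[OF oA z], of v "\<lambda>u. {u, v} \<in> nblue G"]
        by (simp add: Suc_le_eq card_gt_0_iff)
    next
      case False
      obtain w where w: "w \<in> NB" using cNB by (metis card.empty ex_in_conv zero_neq_numeral zero_neq_one)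
      then have "w \<noteq> z" using False by auto
      then have "w \<in> {u. (u, v) \<in> ?B \<and> {u, v} \<in> nblue G}" using allB w unfolding NB_def by auto
      then have "{u. (u, v) \<in> ?B \<and> {u, v} \<in> nblue G} \<noteq> {}" by blast
      then show ?thesis unfolding in_blue_def
        using fin_in[OF G flip_orient[OF oA z], of v "\<lambda>u. {u, v} \<in> nblue G"]
        by (simp add: Suc_le_eq card_gt_0_iff)
    qed
    then have h1: "?B \<in> ncl_solutions G" using flip_sol[OF G A z] by blast
    have h2: "?B \<noteq> A"
    proof
      assume "?B = A"
      then have "(v, z) \<in> A" by auto
      moreover have "(z, v) \<in> A \<longleftrightarrow> (v, z) \<notin> A" using oA2[OF orient_edge[OF oA z]] .
      ultimately show False using z by blast
    qed
    show ?thesis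
    proof (rule bexI[where x = "?B"])
      show "?B \<noteq> A" by (rule h2)
      show "?B \<in> ncl_solutions G" by (rule h1)
    qed
  qed
qed

lemma sols_not_one:
  assumes G: "ncl_instance G" shows "card (ncl_solutions G) \<noteq> 1"
proof
  assume "card (ncl_solutions G) = 1"
  then obtain A where "ncl_solutions G = {A}" by (auto simp: card_1_singleton_iff)
  then show False using second_solution[OF G, of A] by auto
qed

lemma sat_count_nil: "sat_count [] = 1"
proof -
  have "{T. T \<subseteq> cnf_vars [] \<and> cnf_sat T []} = {{}}"
    unfolding cnf_vars_def cnf_sat_def by auto
  then show ?thesis unfolding sat_count_def by simp
qed

theorem corollary19:
  shows "\<not> (\<exists>f :: cnf \<Rightarrow> nat ncl.
            \<forall>F. ncl_instance (f F) \<and> card (ncl_solutions (f F)) = sat_count F)"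
proof
  assume "\<exists>f :: cnf \<Rightarrow> nat ncl. \<forall>F. ncl_instance (f F) \<and> card (ncl_solutions (f F)) = sat_count F"
  then obtain f :: "cnf \<Rightarrow> nat ncl" where "ncl_instance (f []) \<and> card (ncl_solutions (f [])) = sat_count []"
    by blast
  then show False using sols_not_one sat_count_nil by metis
qed

end
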